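(* Let $n\in\mathbb{N}$. For every $i=0,1,\dots,2n-1$, $$\sum_{j=\lfloor i/2\rfloor}^{n-1}\binom{n-1}{j}\left(\binom{n}{j+1}\binom{2j+1}{i}-\binom{n}{j}\binom{2j}{i}\right)\geq 0.$$
   Context: Binomial coefficients $\binom{a}{b}$ with integer $0\le a<b$ are $0$; $\lfloor\cdot\rfloor$ is the integer part. *)

theory Defs
  imports Main
begin

end

theory Submission
  imports Defs "HOL-Computational_Algebra.Polynomial"
begin

lemma coeff_lin_pow:
  "coeff ([:a, b:] ^ n) i = of_nat (n choose i) * b ^ i * (a::'a::comm_semiring_1) ^ (n - i)"
proof (cases "i \<le> n")
  case True then show ?thesis by (rule coeff_linear_poly_power)
next
  case False
  have "degree ([:a, b:] ^ n) \<le> n"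
    by (rule order.trans[OF degree_power_le]) (simp add: degree_pCons_le)
  then show ?thesis using False by (simp add: coeff_eq_0 not_le binomial_eq_0)
qed

lemma coeff_one_plus_x_mult:
  fixes q :: "'a::comm_semiring_1 poly"
  shows "coeff ([:1, 1:] * q) m = coeff q m + (if m = 0 then 0 else coeff q (m - 1))"
  by (cases m) simp_all

lemma cat_nonneg: "(2*r choose Suc r) \<le> (2*r choose r)"
proof -
  have e1: "Suc r * (2*r choose Suc r) = 2*r * ((2*r - 1) choose r)" by (rule binomial_absorption)
  have e2: "(2*r - r)*(2*r choose r) = 2*r*((2*r-1) choose r)" by (rule binomial_absorb_comp)
  have "Suc r * (2*r choose Suc r) = (2*r - r) * (2*r choose r)"
    using e1 e2 by linarith
  also have "\<dots> \<le> Suc r * (2*r choose r)" by simp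
  finally show ?thesis by (simp only: Suc_mult_le_cancel1)
qed

lemma L1:
  fixes y :: "'a::comm_ring_1"
  shows "(\<Sum>j\<le>m. of_nat (m choose j) * (of_nat (Suc m choose Suc j) * y^(2*j+1)
            - of_nat (Suc m choose j) * y^(2*j)))
       = (y - 1) * (\<Sum>j\<le>m. of_nat (m choose j)^2 * y^(2*j)
            - of_nat (m choose j) * of_nat (m choose Suc j) * y^(2*j+1))"
proof -
  define c where "c j = (of_nat (m choose j) :: 'a)" for j
  have pas: "Suc m choose j = (m choose j) + (if j = 0 then 0 else m choose (j - 1))" for j
    by (cases j) simp_all
  define E where "E = (\<Sum>j\<le>m. c j * (if j = 0 then 0 else c (j - 1)) * y^(2*j))"
  define D where "D = (\<Sum>j\<le>m. c j * c (Suc j) * y^(2*j+2))"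
  have ED: "E = D"
  proof (cases m)
    case 0 then show ?thesis by (simp add: E_def D_def c_def)
  next
    case (Suc k)
    have "E = (\<Sum>j\<le>k. c (Suc j) * c j * y^(2*j+2))"
      unfolding E_def Suc sum.atMost_Suc_shift by (simp add: mult_2)
    also have "\<dots> = D"
      unfolding D_def Suc sum.atMost_Suc by (simp add: c_def mult.commute Suc binomial_eq_0)
    finally show ?thesis .
  qed
  have "(\<Sum>j\<le>m. of_nat (m choose j) * (of_nat (Suc m choose Suc j) * y^(2*j+1)
            - of_nat (Suc m choose j) * y^(2*j)))
      = (\<Sum>j\<le>m. c j ^2 * y^(2*j+1) + c j * c (Suc j) * y^(2*j+1) - c j^2 * y^(2*j)
           - c j * (if j = 0 then 0 else c (j - 1)) * y^(2*j))"
    by (rule sum.cong) (auto simp: c_def pas algebra_simps power2_eq_square)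
  also have "\<dots> = (\<Sum>j\<le>m. c j ^2 * y^(2*j+1)) + (\<Sum>j\<le>m. c j * c (Suc j) * y^(2*j+1))
        - (\<Sum>j\<le>m. c j^2 * y^(2*j)) - E"
    by (simp add: E_def sum.distrib sum_subtractf)
  also have "\<dots> = (y - 1) * (\<Sum>j\<le>m. c j^2 * y^(2*j) - c j * c (Suc j) * y^(2*j+1))"
    unfolding ED D_def
    by (simp add: sum_subtractf sum_distrib_left algebra_simps sum.distrib)
  finally show ?thesis by (simp add: c_def)
qed

lemma coeff_cat:
  "coeff ([:1, 1:] * [:1, -1:] ^ (2*r)) r
     = ((-1)^r :: 'a::comm_ring_1) * (of_nat (2*r choose r) - of_nat (2*r choose Suc r))"
proof (cases r)
  case 0 then show ?thesis by (simp add: coeff_lin_pow)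
next
  case (Suc s)
  have sym: "2*r choose s = 2*r choose Suc r"
    using binomial_symmetric[of s "2*r"] Suc by simp
  show ?thesis
    unfolding coeff_one_plus_x_mult coeff_lin_pow using Suc sym
    by (simp add: algebra_simps)
qed

lemma const_mult_eq_smult: "[:a:] * p = smult a p"
  by simp

lemma term_eq:
  fixes a d :: "'a::comm_ring_1"
  shows "of_nat C * (smult a (p^2))^r * (smult d [:0,1:])^k
        = smult (of_nat C * a^r * d^k) (monom 1 k * p^(2*r))"
proof -
  have "of_nat C * (smult a (p^2))^r * (smult d [:0,1:])^k
      = smult (of_nat C) (smult (a^r) ((p^2)^r) * smult (d^k) ([:0,1:]^k))"
    by (simp only: smult_power of_nat_poly const_mult_eq_smult mult.assoc mult_smult_left)
  also have "\<dots> = smult (of_nat C * a^r * d^k) ([:0,1:]^k * (p^2)^r)"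
    by (simp only: mult_smult_left mult_smult_right smult_smult mult_ac)
  also have "(p^2)^r = p^(2*r)" by (simp only: power_mult)
  also have "[:0,1:]^k = (monom 1 k :: 'a poly)" by (simp add: monom_altdef)
  finally show ?thesis .
qed

lemma L2:
  fixes y :: "'a::comm_ring_1"
  shows "(\<Sum>j\<le>m. of_nat (m choose j)^2 * y^(2*j)
            - of_nat (m choose j) * of_nat (m choose Suc j) * y^(2*j+1))
       = (\<Sum>r\<le>m. of_nat (m choose r) * (of_nat (2*r choose r) - of_nat (2*r choose Suc r))
            * (y - 1)^(2*(m-r)) * y^r)"
proof -
  define c where "c j = (of_nat (m choose j) :: 'a)" for j
  define A where "A = [:1, -y:]^m"
  define B where "B = [:-y, 1:]^m"
  define Q where "Q = A * B"
  define P where "P = [:1, 1:] * Q"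
  have cA: "coeff A k = c k * (-y)^k" for k
    by (simp add: A_def coeff_lin_pow c_def)
  have cB: "coeff B k = c k * (-y)^(m-k)" for k
    by (simp add: B_def coeff_lin_pow c_def)
  have sq: "(-y)^k * (-y)^k = y^(2*k)" for k
    by (simp add: power_mult_distrib[symmetric] power_mult power2_eq_square)
  have Qm: "coeff Q m = (\<Sum>j\<le>m. c j^2 * y^(2*j))"
    unfolding Q_def coeff_mult
  proof (rule sum.cong)
    fix k assume "k \<in> {..m}"
    then have k: "k \<le> m" by simp
    have "c (m - k) = c k" unfolding c_def using binomial_symmetric[OF k] by simp
    then show "coeff A k * coeff B (m - k) = c k ^ 2 * y^(2*k)"
      using k sq[of k] by (simp add: cA cB power2_eq_square algebra_simps)
  qed simp
  have Qm1: "coeff Q k = - (\<Sum>j\<le>m. c j * c (Suc j) * y^(2*j+1))" if mk: "m = Suc k" for k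
  proof -
    have "coeff Q k = (\<Sum>j\<le>k. - (c j * c (Suc j) * y^(2*j+1)))"
      unfolding Q_def coeff_mult
    proof (rule sum.cong)
      fix j assume "j \<in> {..k}"
      then have j: "j \<le> k" by simp
      have f1: "c (k - j) = c (Suc j)" unfolding c_def
        using binomial_symmetric[of "Suc j" m] j mk by simp
      have f2: "m - (k - j) = Suc j" using j mk by simp
      have "(-y)^j * (-y)^(Suc j) = - (y^(2*j+1))"
      proof -
        have "(-y)^j * (-y)^(Suc j) = (-y) * ((-y)^j * (-y)^j)" by (simp add: mult_ac)
        also have "\<dots> = - (y^(2*j+1))" unfolding sq by simp
        finally show ?thesis .
      qed
      have "coeff A j * coeff B (k - j) = c j * c (Suc j) * ((-y)^j * (-y)^(Suc j))"
        unfolding cA cB f1 f2 by (simp only: mult_ac)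
      also have "\<dots> = - (c j * c (Suc j) * y^(2*j+1))"
        using \<open>(-y)^j * (-y)^(Suc j) = - (y^(2*j+1))\<close> by simp
      finally show "coeff A j * coeff B (k - j) = - (c j * c (Suc j) * y^(2*j+1))" .
    qed simp
    also have "\<dots> = - (\<Sum>j\<le>m. c j * c (Suc j) * y^(2*j+1))"
      unfolding mk sum.atMost_Suc by (simp add: sum_negf c_def mk binomial_eq_0)
    finally show ?thesis .
  qed
  have left: "coeff P m = (\<Sum>j\<le>m. c j^2 * y^(2*j) - c j * c (Suc j) * y^(2*j+1))"
  proof (cases m)
    case 0 then show ?thesis unfolding P_def coeff_one_plus_x_mult using Qm
      by (simp add: c_def)
  next
    case (Suc k) then show ?thesis unfolding P_def coeff_one_plus_x_mult using Qm Qm1[OF Suc]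
      by (simp add: sum_subtractf)
  qed
  have AB: "[:1, -y:] * [:-y, 1:] = smult (-y) ([:1, -1:]^2) + smult ((y-1)^2) [:0, 1:]"
    by (simp add: power2_eq_square algebra_simps)
  have Qsum: "Q = (\<Sum>r\<le>m. smult (c r * (-y)^r * ((y-1)^2)^(m-r))
                      (monom 1 (m-r) * [:1, -1:]^(2*r)))"
  proof -
    have "Q = ([:1, -y:] * [:-y, 1:])^m" by (simp only: Q_def A_def B_def power_mult_distrib)
    also have "\<dots> = (\<Sum>r\<le>m. of_nat (m choose r) * (smult (-y) ([:1, -1:]^2))^r
                      * (smult ((y-1)^2) [:0, 1:])^(m-r))"
      unfolding AB by (rule binomial_ring)
    also have "\<dots> = (\<Sum>r\<le>m. smult (c r * (-y)^r * ((y-1)^2)^(m-r))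
                      (monom 1 (m-r) * [:1, -1:]^(2*r)))"
      by (rule sum.cong[OF refl]) (simp only: c_def term_eq)
    finally show ?thesis .
  qed
  have right: "coeff P m = (\<Sum>r\<le>m. c r * (of_nat (2*r choose r) - of_nat (2*r choose Suc r))
            * (y - 1)^(2*(m-r)) * y^r)"
  proof -
    have "coeff P m = (\<Sum>r\<le>m. c r * (-y)^r * ((y-1)^2)^(m-r) *
                  coeff (monom 1 (m-r) * ([:1, 1:] * [:1, -1:]^(2*r))) m)"
      unfolding P_def Qsum sum_distrib_left coeff_sum
      by (rule sum.cong) (simp_all add: mult.left_commute)
    also have "\<dots> = (\<Sum>r\<le>m. c r * (-y)^r * ((y-1)^2)^(m-r) *
                  ((-1)^r * (of_nat (2*r choose r) - of_nat (2*r choose Suc r))))"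
      by (rule sum.cong) (simp_all add: coeff_monom_mult coeff_cat del: mult_pCons_left)
    also have "\<dots> = (\<Sum>r\<le>m. c r * (of_nat (2*r choose r) - of_nat (2*r choose Suc r))
            * (y - 1)^(2*(m-r)) * y^r)"
    proof (rule sum.cong)
      fix r
      have "(-y)^r * (-1)^r = y^r"
        by (simp add: power_mult_distrib[symmetric] power_mult power2_eq_square)
      then show "c r * (-y)^r * ((y-1)^2)^(m-r) *
                  ((-1)^r * (of_nat (2*r choose r) - of_nat (2*r choose Suc r)))
           = c r * (of_nat (2*r choose r) - of_nat (2*r choose Suc r))
            * (y - 1)^(2*(m-r)) * y^r"
      proof -
        define K where "K = (of_nat (2*r choose r) - of_nat (2*r choose Suc r) :: 'a)"
        have "((y-1)^2)^(m-r) = (y-1)^(2*(m-r))" by (simp only: power_mult)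
        then have "c r * (-y)^r * ((y-1)^2)^(m-r) * ((-1)^r * K)
             = c r * K * (y-1)^(2*(m-r)) * ((-y)^r * (-1)^r)" by (simp only: mult_ac)
        also have "\<dots> = c r * K * (y-1)^(2*(m-r)) * y^r"
          using \<open>(-y)^r * (-1)^r = y^r\<close> by (simp only:)
        finally show ?thesis unfolding K_def .
      qed
    qed simp
    finally show ?thesis .
  qed
  show ?thesis using left right by (simp add: c_def)
qed

definition nn :: "int poly \<Rightarrow> bool" where "nn p \<longleftrightarrow> (\<forall>k. coeff p k \<ge> 0)"

lemma nn_mult: "nn p \<Longrightarrow> nn q \<Longrightarrow> nn (p * q)"
  unfolding nn_def coeff_mult by (auto intro!: sum_nonneg mult_nonneg_nonneg)

lemma nn_sum: "(\<And>x. x \<in> A \<Longrightarrow> nn (f x)) \<Longrightarrow> nn (sum f A)"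
  unfolding nn_def coeff_sum by (auto intro!: sum_nonneg)

lemma nn_pow: "nn p \<Longrightarrow> nn (p ^ k)"
proof (induction k)
  case 0 show ?case by (simp add: nn_def coeff_1)
next
  case (Suc k) then show ?case by (simp add: nn_mult)
qed

lemma nn_const: "a \<ge> 0 \<Longrightarrow> nn [:a:]"
  unfolding nn_def by (auto simp: coeff_pCons split: nat.split)

lemma nn_lin: "a \<ge> 0 \<Longrightarrow> b \<ge> 0 \<Longrightarrow> nn [:a, b:]"
  unfolding nn_def by (auto simp: coeff_pCons split: nat.split)

lemma coeff_ofnat_mult: "coeff (of_nat k * p) i = of_nat k * coeff (p :: int poly) i"
  by (simp add: of_nat_poly)

theorem mainTheorem7:
  fixes n i :: nat
  assumes "i < 2 * n"
  shows "(\<Sum>j = i div 2..n - 1.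
            int ((n - 1) choose j) *
            (int (n choose (j + 1)) * int ((2 * j + 1) choose i)
             - int (n choose j) * int ((2 * j) choose i))) \<ge> 0"
proof -
  obtain m where n: "n = Suc m" using assms by (cases n) auto
  define t where "t j = int (m choose j) * (int (Suc m choose Suc j) * int ((2 * j + 1) choose i)
             - int (Suc m choose j) * int ((2 * j) choose i))" for j
  have hm: "i div 2 \<le> m" using assms n by simp
  have "(\<Sum>j = i div 2..n - 1.
            int ((n - 1) choose j) *
            (int (n choose (j + 1)) * int ((2 * j + 1) choose i)
             - int (n choose j) * int ((2 * j) choose i))) = (\<Sum>j = i div 2..m. t j)"
    by (simp add: n t_def)
  also have "\<dots> = (\<Sum>j\<le>m. t j)"
  proof (rule sum.mono_neutral_left)
    show "\<forall>j\<in>{..m} - {i div 2..m}. t j = 0"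
    proof
      fix j assume "j \<in> {..m} - {i div 2..m}"
      then have "j < i div 2" by auto
      then have "2*j+1 < i" by linarith
      then show "t j = 0" by (simp add: t_def binomial_eq_0)
    qed
  qed auto
  also have "\<dots> = coeff (\<Sum>j\<le>m. of_nat (m choose j) * (of_nat (Suc m choose Suc j) * [:1,1:]^(2*j+1)
            - of_nat (Suc m choose j) * [:1,1:]^(2*j))) i"
    unfolding coeff_sum
    by (rule sum.cong[OF refl]) (simp only: t_def coeff_ofnat_mult coeff_diff coeff_lin_pow power_one mult_1_right)
  also have "(\<Sum>j\<le>m. of_nat (m choose j) * (of_nat (Suc m choose Suc j) * [:1,1:]^(2*j+1)
            - of_nat (Suc m choose j) * [:1,1:]^(2*j)))
       = ([:1,1:] - 1) * (\<Sum>r\<le>m. of_nat (m choose r) * (of_nat (2*r choose r) - of_nat (2*r choose Suc r))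
            * ([:1,1:] - 1)^(2*(m-r)) * ([:1,1::int:])^r)"
    unfolding L1 L2 ..
  also have "[:1,1:] - 1 = [:0, 1::int:]" by (simp add: one_pCons)
  finally have eq: "(\<Sum>j = i div 2..n - 1.
            int ((n - 1) choose j) *
            (int (n choose (j + 1)) * int ((2 * j + 1) choose i)
             - int (n choose j) * int ((2 * j) choose i))) = coeff ([:0, 1::int:] * (\<Sum>r\<le>m. of_nat (m choose r) * (of_nat (2*r choose r) - of_nat (2*r choose Suc r))
            * [:0, 1::int:]^(2*(m-r)) * ([:1,1::int:])^r)) i" .
  have "nn ([:0, 1::int:] * (\<Sum>r\<le>m. of_nat (m choose r) * (of_nat (2*r choose r) - of_nat (2*r choose Suc r))
            * [:0, 1::int:]^(2*(m-r)) * ([:1,1::int:])^r))"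
  proof (intro nn_mult nn_sum nn_pow nn_lin)
    fix r
    have "(of_nat (2*r choose r) - of_nat (2*r choose Suc r) :: int poly)
        = [:int (2*r choose r) - int (2*r choose Suc r):]"
      by (simp add: of_nat_poly)
    then show "nn (of_nat (2*r choose r) - of_nat (2*r choose Suc r))"
      using cat_nonneg[of r] by (auto intro!: nn_const)
    show "nn (of_nat (m choose r))" by (simp add: of_nat_poly nn_const)
  qed auto
  then have "\<forall>k. 0 \<le> coeff ([:0, 1::int:] * (\<Sum>r\<le>m. of_nat (m choose r) * (of_nat (2*r choose r) - of_nat (2*r choose Suc r))
            * [:0, 1::int:]^(2*(m-r)) * ([:1,1::int:])^r)) k" unfolding nn_def .
  then show ?thesis unfolding eq by blast
qed

end
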